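(* Let $S_1,\dots,S_d$ be independent random variables with $S_j\sim\mathrm{Bin}(n,u_j)$ and $0<u_j<1$ for all $j\in\{1,\dots,d\}$, and write $\mathbf u=(u_1,\dots,u_d)$. Then for every $\delta>0$, $$P\Big\{g\big(\tfrac{S_1}n,\dots,\tfrac{S_d}n\big)\ge g(\mathbf u)(1+\delta)\Big\}\le 2d\exp\{-n\,g(\mathbf u)\,h(1+\delta)\},$$ $$P\Big\{g\big(\tfrac{S_1}n,\dots,\tfrac{S_d}n\big)\le g(\mathbf u)(1-\delta)\Big\}\le 4d\exp\{-n\,g(\mathbf u)\,h(1+\delta)\},$$ and in particular $h(1+\delta)\ge\frac13\delta^2$ for $0<\delta\le1$.
   Context: $d\ge2$; $g(\mathbf u)=\bigwedge_{j=1}^d\{u_j\wedge\bigvee_{k\ne j}(1-u_k)\}$ for $\mathbf u\in[0,1]^d$ ($\wedge$ = min, $\vee$ = max); $h(x)=x(\log x-1)+1$ for $x>0$. *)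

theory Defs
  imports "HOL-Probability.Probability"
begin

definition gfun :: "nat \<Rightarrow> (nat \<Rightarrow> real) \<Rightarrow> real" where
  "gfun d u = Min ((\<lambda>j. min (u j) (Max ((\<lambda>k. 1 - u k) ` ({1..d} - {j})))) ` {1..d})"

definition hfun :: "real \<Rightarrow> real" where
  "hfun x = x * (ln x - 1) + 1"

end

theory Submission
  imports Defs
begin

lemma ln_upper_aux:
  fixes x :: real assumes "0 \<le> x"
  shows "2 * ln (1 + x) \<le> x + x / (1 + x)"
proof -
  define f where "f y = y + y / (1 + y) - 2 * ln (1 + y)" for y :: real
  have d: "(f has_real_derivative (1 + 1/(1+y)^2 - 2/(1+y))) (at y)" if "0 \<le> y" for y
    unfolding f_def using that
    apply (auto intro!: derivative_eq_intros)
    using that apply (simp add: divide_simps power2_eq_square)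
    done
  have nn: "0 \<le> 1 + 1/(1+y)^2 - 2/(1+y)" if "0 \<le> y" for y :: real
  proof -
    have "1 + 1/(1+y)^2 - 2/(1+y) = (1 - 1/(1+y))^2" using that
      by (simp add: power2_diff power_divide)
    thus ?thesis by simp
  qed
  have "f 0 \<le> f x"
    apply (rule DERIV_nonneg_imp_nondecreasing[OF assms])
    using d nn by (metis order_trans)
  thus ?thesis by (simp add: f_def)
qed

lemma ln_lower_aux:
  fixes x :: real assumes "0 \<le> x"
  shows "2 * x / (2 + x) \<le> ln (1 + x)"
proof -
  define f where "f y = ln (1 + y) - 2 * y / (2 + y)" for y :: real
  have d: "(f has_real_derivative (1/(1+y) - 4/(2+y)^2)) (at y)" if "0 \<le> y" for y
    unfolding f_def using that
    apply (auto intro!: derivative_eq_intros)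
    using that apply (simp add: divide_simps power2_eq_square)
    done
  have nn: "0 \<le> 1/(1+y) - 4/(2+y)^2" if "0 \<le> y" for y :: real
  proof -
    have "4*(1+y) \<le> (2+y)^2" by (simp add: power2_eq_square algebra_simps)
    hence "4/(2+y)^2 \<le> 1/(1+y)" using that by (simp add: divide_simps)
    thus ?thesis by simp
  qed
  have "f 0 \<le> f x"
    apply (rule DERIV_nonneg_imp_nondecreasing[OF assms])
    using d nn by (metis order_trans)
  thus ?thesis by (simp add: f_def)
qed

lemma hfun_lower:
  fixes \<delta> :: real assumes "0 < \<delta>" "\<delta> \<le> 1"
  shows "\<delta>^2 / 3 \<le> hfun (1 + \<delta>)"
proof -
  have l: "2 * \<delta> / (2 + \<delta>) \<le> ln (1 + \<delta>)" using ln_lower_aux assms by simp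
  have "(\<delta> + \<delta>^2/3) / (1 + \<delta>) \<le> 2 * \<delta> / (2 + \<delta>)"
    using assms by (simp add: field_simps power2_eq_square)
  moreover have "(1+\<delta>) * (2 * \<delta> / (2 + \<delta>)) \<le> (1+\<delta>) * ln (1 + \<delta>)"
    using l assms by (intro mult_left_mono) auto
  ultimately have "(\<delta> + \<delta>^2/3) \<le> (1+\<delta>) * ln (1 + \<delta>)" using assms
    by (smt (verit, best) pos_divide_le_eq mult.commute)
  thus ?thesis unfolding hfun_def by (simp add: algebra_simps)
qed


lemma prob_binom_sum:
  assumes "0 < p" "p < 1"
  shows "measure_pmf.prob (binomial_pmf n p) {k. P k}
       = (\<Sum>k\<le>n. if P k then real (n choose k) * p^k * (1-p)^(n-k) else 0)"
proof -
  have "measure_pmf.prob (binomial_pmf n p) {k. P k}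
      = measure_pmf.prob (binomial_pmf n p) ({k. P k} \<inter> {..n})"
    using measure_Int_set_pmf[of "binomial_pmf n p" "{k. P k}"] assms by simp
  also have "\<dots> = sum (pmf (binomial_pmf n p)) ({k. P k} \<inter> {..n})"
    by (rule measure_measure_pmf_finite) simp
  also have "\<dots> = (\<Sum>k\<le>n. if P k then pmf (binomial_pmf n p) k else 0)"
    by (simp add: sum.If_cases Int_commute)
  also have "\<dots> = (\<Sum>k\<le>n. if P k then real (n choose k) * p^k * (1-p)^(n-k) else 0)"
    using assms by (intro sum.cong refl) (simp add: pmf_binomial)
  finally show ?thesis .
qed

lemma binom_sym:
  assumes "0 < p" "p < 1" and QP: "\<And>k. k \<le> n \<Longrightarrow> Q k = P (n - k)"
  shows "measure_pmf.prob (binomial_pmf n p) {k. Q k}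
       = measure_pmf.prob (binomial_pmf n (1 - p)) {k. P k}"
proof -
  have "(\<Sum>k\<le>n. if Q k then real (n choose k) * p^k * (1-p)^(n-k) else 0)
      = (\<Sum>k\<le>n. if P (n - k) then real (n choose k) * p^k * (1-p)^(n-k) else 0)"
    using QP by (intro sum.cong refl) auto
  also have "\<dots> = (\<Sum>k\<le>n. if P k then real (n choose k) * (1-p)^k * (1-(1-p))^(n-k) else 0)"
    apply (rule sum.reindex_bij_witness[where i="\<lambda>k. n - k" and j="\<lambda>k. n - k"])
    apply auto
    apply (metis binomial_symmetric diff_diff_cancel mult.commute mult.left_commute)+
    done
  finally show ?thesis using assms by (simp add: prob_binom_sum)
qed

lemma chernoff_up:
  assumes p: "0 < p" "p < 1" "p \<le> q" and d: "0 < \<delta>"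
  shows "measure_pmf.prob (binomial_pmf n p) {k. real n * q * (1+\<delta>) \<le> real k}
           \<le> exp (- (real n * q * hfun (1+\<delta>)))"
proof -
  define t where "t = ln (1+\<delta>)"
  define a where "a = real n * q * (1+\<delta>)"
  have et: "exp t = 1 + \<delta>" using d by (simp add: t_def)
  have "measure_pmf.prob (binomial_pmf n p) {k. a \<le> real k}
      = (\<Sum>k\<le>n. if a \<le> real k then real (n choose k) * p^k * (1-p)^(n-k) else 0)"
    using p by (simp add: prob_binom_sum)
  also have "\<dots> \<le> (\<Sum>k\<le>n. real (n choose k) * p^k * (1-p)^(n-k) * exp (t * (real k - a)))"
  proof (rule sum_mono)
    fix k assume "k \<in> {..n}"
    have w: "0 \<le> real (n choose k) * p^k * (1-p)^(n-k)" using p by simp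
    have "0 \<le> t" using d by (simp add: t_def)
    show "(if a \<le> real k then real (n choose k) * p^k * (1-p)^(n-k) else 0)
        \<le> real (n choose k) * p^k * (1-p)^(n-k) * exp (t * (real k - a))"
    proof (cases "a \<le> real k")
      case True
      hence "1 \<le> exp (t * (real k - a))" using \<open>0 \<le> t\<close> by simp
      thus ?thesis using True w by (simp add: mult_le_cancel_left1)
    qed (use w in simp)
  qed
  also have "\<dots> = exp (- t * a) * (\<Sum>k\<le>n. real (n choose k) * (p * exp t)^k * (1-p)^(n-k))"
  proof -
    have e: "exp (t * (real k - a)) = exp (- t * a) * exp t ^ k" for k
      by (simp add: algebra_simps flip: exp_of_nat_mult exp_add)
    show ?thesis by (simp add: e sum_distrib_left power_mult_distrib mult_ac)
  qed
  also have "\<dots> = exp (- t * a) * (p * exp t + (1 - p))^n"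
    by (simp add: binomial_ring)
  also have "\<dots> \<le> exp (- t * a) * exp (real n * q * \<delta>)"
  proof -
    have "(p * exp t + (1 - p))^n = (1 + p * \<delta>)^n" by (simp add: et algebra_simps)
    also have "\<dots> \<le> exp (p * \<delta>) ^ n"
      using p d by (intro power_mono) (auto simp: exp_ge_add_one_self intro: add_nonneg_nonneg)
    also have "\<dots> = exp (real n * (p * \<delta>))" by (simp add: exp_of_nat_mult)
    also have "\<dots> \<le> exp (real n * q * \<delta>)"
      using p d by (simp add: mult_left_mono mult_right_mono mult.assoc)
    finally show ?thesis by simp
  qed
  also have "\<dots> = exp (- (real n * q * hfun (1+\<delta>)))"
    by (simp add: a_def t_def hfun_def flip: exp_add) (simp add: algebra_simps)
  finally show ?thesis by (simp add: a_def)
qed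

lemma chernoff_low:
  assumes p: "0 < p" "p < 1" "q \<le> p" "0 \<le> q" and d: "0 < \<delta>"
  shows "measure_pmf.prob (binomial_pmf n p) {k. real k \<le> real n * q * (1-\<delta>)}
           \<le> exp (- (real n * q * hfun (1+\<delta>)))"
proof -
  define t where "t = ln (1+\<delta>)"
  define a where "a = real n * q * (1-\<delta>)"
  have et: "exp (-t) = 1 / (1 + \<delta>)" using d by (simp add: t_def exp_minus inverse_eq_divide)
  have "measure_pmf.prob (binomial_pmf n p) {k. real k \<le> a}
      = (\<Sum>k\<le>n. if real k \<le> a then real (n choose k) * p^k * (1-p)^(n-k) else 0)"
    using p by (simp add: prob_binom_sum)
  also have "\<dots> \<le> (\<Sum>k\<le>n. real (n choose k) * p^k * (1-p)^(n-k) * exp (t * (a - real k)))"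
  proof (rule sum_mono)
    fix k assume "k \<in> {..n}"
    have w: "0 \<le> real (n choose k) * p^k * (1-p)^(n-k)" using p by simp
    have "0 \<le> t" using d by (simp add: t_def)
    show "(if real k \<le> a then real (n choose k) * p^k * (1-p)^(n-k) else 0)
        \<le> real (n choose k) * p^k * (1-p)^(n-k) * exp (t * (a - real k))"
    proof (cases "real k \<le> a")
      case True
      hence "1 \<le> exp (t * (a - real k))" using \<open>0 \<le> t\<close> by simp
      thus ?thesis using True w by (simp add: mult_le_cancel_left1)
    qed (use w in simp)
  qed
  also have "\<dots> = exp (t * a) * (\<Sum>k\<le>n. real (n choose k) * (p * exp (-t))^k * (1-p)^(n-k))"
  proof -
    have e: "exp (t * (a - real k)) = exp (t * a) * exp (-t) ^ k" for k
      by (simp add: algebra_simps flip: exp_of_nat_mult exp_add)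
    show ?thesis by (simp add: e sum_distrib_left power_mult_distrib mult_ac)
  qed
  also have "\<dots> = exp (t * a) * (p * exp (-t) + (1 - p))^n"
    by (simp add: binomial_ring)
  also have "\<dots> \<le> exp (t * a) * exp (- (real n * q * (\<delta> / (1+\<delta>))))"
  proof -
    have "(p * exp (-t) + (1 - p))^n = (1 + (- (p * (\<delta> / (1+\<delta>)))))^n"
      using d by (simp add: et field_simps)
    also have "\<dots> \<le> exp (- (p * (\<delta> / (1+\<delta>)))) ^ n"
    proof (intro power_mono)
      have "p * (\<delta> / (1+\<delta>)) \<le> 1 * 1" using p d
        by (intro mult_mono) auto
      thus "0 \<le> 1 + - (p * (\<delta> / (1 + \<delta>)))" by simp
    qed (use exp_ge_add_one_self[of "- (p * (\<delta> / (1+\<delta>)))"] in simp)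
    also have "\<dots> = exp (- (real n * (p * (\<delta> / (1+\<delta>)))))"
      using exp_of_nat_mult[of n "- (p * (\<delta> / (1+\<delta>)))"] by simp
    also have "\<dots> \<le> exp (- (real n * q * (\<delta> / (1+\<delta>))))"
    proof -
      have "q * (\<delta> / (1+\<delta>)) \<le> p * (\<delta> / (1+\<delta>))"
        using p d by (intro mult_right_mono) auto
      hence "real n * (q * (\<delta> / (1+\<delta>))) \<le> real n * (p * (\<delta> / (1+\<delta>)))"
        by (intro mult_left_mono) auto
      thus ?thesis by (simp add: mult.assoc)
    qed
    finally show ?thesis by simp
  qed
  also have "\<dots> \<le> exp (- (real n * q * hfun (1+\<delta>)))"
  proof -
    have l: "2 * ln (1 + \<delta>) \<le> \<delta> + \<delta> / (1 + \<delta>)" using ln_upper_aux d by simp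
    have "t * (1-\<delta>) - \<delta>/(1+\<delta>) \<le> - hfun (1+\<delta>)"
      using l by (simp add: t_def hfun_def algebra_simps)
    hence "real n * q * (t * (1-\<delta>) - \<delta>/(1+\<delta>)) \<le> real n * q * (- hfun (1+\<delta>))"
      using p by (intro mult_left_mono) auto
    thus ?thesis by (simp add: a_def flip: exp_add) (simp add: algebra_simps)
  qed
  finally show ?thesis by (simp add: a_def)
qed


definition mg :: "nat \<Rightarrow> (nat \<Rightarrow> real) \<Rightarrow> nat \<Rightarrow> real" where
  "mg d w j = Max ((\<lambda>k. 1 - w k) ` ({1..d} - {j}))"

lemma gfun_alt: "gfun d w = Min ((\<lambda>j. min (w j) (mg d w j)) ` {1..d})"
  by (simp add: gfun_def mg_def)

lemma gfun_le: "j \<in> {1..d} \<Longrightarrow> gfun d w \<le> min (w j) (mg d w j)"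
  unfolding gfun_alt by (rule Min_le) auto

lemma gfun_attained: "d \<ge> 1 \<Longrightarrow> \<exists>j\<in>{1..d}. gfun d w = min (w j) (mg d w j)"
proof -
  assume "d \<ge> 1"
  hence "gfun d w \<in> (\<lambda>j. min (w j) (mg d w j)) ` {1..d}"
    unfolding gfun_alt by (intro Min_in) auto
  thus ?thesis by auto
qed

lemma mg_ne: "(d::nat) \<ge> 2 \<Longrightarrow> j \<in> {1..d} \<Longrightarrow> {1..d} - {j} \<noteq> {}"
proof -
  assume "d \<ge> 2"
  hence "(1::nat) \<in> {1..d}" "(2::nat) \<in> {1..d}" by auto
  hence "1 \<in> {1..d} - {j} \<or> 2 \<in> {1..d} - {j}" by auto
  thus ?thesis by blast
qed

lemma mg_attained: "d \<ge> 2 \<Longrightarrow> j \<in> {1..d} \<Longrightarrow> \<exists>k\<in>{1..d} - {j}. mg d w j = 1 - w k"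
proof -
  assume a: "d \<ge> 2" "j \<in> {1..d}"
  hence "mg d w j \<in> (\<lambda>k. 1 - w k) ` ({1..d} - {j})"
    unfolding mg_def using mg_ne[OF a] by (intro Max_in) auto
  thus ?thesis by auto
qed

lemma mg_ge: "k \<in> {1..d} - {j} \<Longrightarrow> 1 - w k \<le> mg d w j"
  unfolding mg_def by (rule Max_ge) auto

lemma gfun_pos:
  assumes "d \<ge> 2" "\<And>j. j \<in> {1..d} \<Longrightarrow> 0 < u j \<and> u j < 1"
  shows "0 < gfun d u"
proof -
  obtain j where j: "j \<in> {1..d}" "gfun d u = min (u j) (mg d u j)"
    using gfun_attained[of d u] assms by auto
  obtain k where k: "k \<in> {1..d} - {j}" "mg d u j = 1 - u k"
    using mg_attained[OF assms(1) j(1), of u] by blast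
  show ?thesis using j k assms(2)[of j] assms(2)[of k] by auto
qed


theorem lemma8:
  fixes M :: "'a measure" and S :: "nat \<Rightarrow> 'a \<Rightarrow> nat" and u :: "nat \<Rightarrow> real"
    and d n :: nat and \<delta> :: real
  assumes "prob_space M"
    and "d \<ge> 2"
    and "prob_space.indep_vars M (\<lambda>_. count_space UNIV) S {1..d}"
    and "\<And>j. j \<in> {1..d} \<Longrightarrow> distr M (count_space UNIV) (S j) = measure_pmf (binomial_pmf n (u j))"
    and "\<And>j. j \<in> {1..d} \<Longrightarrow> 0 < u j \<and> u j < 1"
    and "\<delta> > 0"
  shows "measure M {x \<in> space M. gfun d (\<lambda>j. real (S j x) / real n) \<ge> gfun d u * (1 + \<delta>)}
           \<le> 2 * real d * exp (- real n * gfun d u * hfun (1 + \<delta>))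
     \<and> measure M {x \<in> space M. gfun d (\<lambda>j. real (S j x) / real n) \<le> gfun d u * (1 - \<delta>)}
           \<le> 4 * real d * exp (- real n * gfun d u * hfun (1 + \<delta>))
     \<and> (\<delta> \<le> 1 \<longrightarrow> hfun (1 + \<delta>) \<ge> \<delta>\<^sup>2 / 3)"
proof -
  interpret P: prob_space M by fact
  let ?I = "{1..d}"
  define G where "G = gfun d u"
  define E where "E = exp (- (real n * G * hfun (1+\<delta>)))"
  define v where "v x = (\<lambda>j. real (S j x) / real n)" for x
  have Eeq: "exp (- real n * gfun d u * hfun (1 + \<delta>)) = E" by (simp add: E_def G_def)
  have E0: "0 \<le> E" by (simp add: E_def)
  have d1: "1 \<le> real d" using assms(2) by simp
  have Gpos: "0 < G" unfolding G_def using gfun_pos assms(2,5) by blast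
  have u01: "\<And>j. j \<in> ?I \<Longrightarrow> 0 < u j \<and> u j < 1" by (rule assms(5))
  have rv: "\<And>j. j \<in> ?I \<Longrightarrow> S j \<in> measurable M (count_space UNIV)"
    using assms(3) unfolding P.indep_vars_def2 by auto
  have setS: "\<And>j Q. j \<in> ?I \<Longrightarrow> {x \<in> space M. Q (S j x)} \<in> sets M"
  proof -
    fix j Q assume j: "j \<in> ?I"
    have "S j -` {k. Q k} \<inter> space M \<in> sets M" by (rule measurable_sets[OF rv[OF j]]) simp
    moreover have "S j -` {k. Q k} \<inter> space M = {x \<in> space M. Q (S j x)}" by auto
    ultimately show "{x \<in> space M. Q (S j x)} \<in> sets M" by simp
  qed
  have conv: "\<And>j Q. j \<in> ?I \<Longrightarrow> measure M {x \<in> space M. Q (S j x)}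
      = measure_pmf.prob (binomial_pmf n (u j)) {k. Q k}"
  proof -
    fix j Q assume j: "j \<in> ?I"
    have "measure (distr M (count_space UNIV) (S j)) {k. Q k} = measure M (S j -` {k. Q k} \<inter> space M)"
      by (rule measure_distr[OF rv[OF j]]) simp
    moreover have "S j -` {k. Q k} \<inter> space M = {x \<in> space M. Q (S j x)}" by auto
    ultimately show "measure M {x \<in> space M. Q (S j x)} = measure_pmf.prob (binomial_pmf n (u j)) {k. Q k}"
      using assms(4)[OF j] by simp
  qed
  have hpart: "\<delta> \<le> 1 \<longrightarrow> hfun (1 + \<delta>) \<ge> \<delta>\<^sup>2 / 3" using hfun_lower assms(6) by auto
  show ?thesis
  proof (cases "n = 0")
    case True
    have "E = 1" by (simp add: E_def True)
    hence b: "1 \<le> 2 * real d * E" "1 \<le> 4 * real d * E" using d1 by auto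
    show ?thesis unfolding Eeq using b hpart P.prob_le_1 order_trans by blast
  next
    case False
    hence npos: "0 < real n" by simp
    have vge: "c \<le> v x j \<longleftrightarrow> real n * c \<le> real (S j x)" for c x j
      using npos by (simp add: v_def pos_le_divide_eq mult.commute)
    have vle: "v x j \<le> c \<longleftrightarrow> real (S j x) \<le> real n * c" for c x j
      using npos by (simp add: v_def pos_divide_le_eq mult.commute)
    have U: "measure M {x \<in> space M. gfun d (v x) \<ge> G * (1 + \<delta>)} \<le> real d * E"
    proof -
      obtain j0 where j0: "j0 \<in> ?I" "G = min (u j0) (mg d u j0)"
        using gfun_attained[of d u] assms(2) unfolding G_def by auto
      show ?thesis
      proof (cases "u j0 \<le> mg d u j0")
        case True
        hence G0: "G = u j0" using j0 by simp
        have sub: "{x \<in> space M. gfun d (v x) \<ge> G * (1 + \<delta>)}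
            \<subseteq> {x \<in> space M. real n * u j0 * (1+\<delta>) \<le> real (S j0 x)}"
        proof safe
          fix x assume "x \<in> space M" "G * (1 + \<delta>) \<le> gfun d (v x)"
          moreover have "gfun d (v x) \<le> v x j0" using gfun_le[OF j0(1), of "v x"] by simp
          ultimately have "G * (1+\<delta>) \<le> v x j0" by linarith
          thus "real n * u j0 * (1+\<delta>) \<le> real (S j0 x)" using vge G0 by (simp add: mult.assoc)
        qed
        have "measure M {x \<in> space M. gfun d (v x) \<ge> G * (1 + \<delta>)}
            \<le> measure M {x \<in> space M. real n * u j0 * (1+\<delta>) \<le> real (S j0 x)}"
          by (rule P.finite_measure_mono[OF sub setS[OF j0(1)]])
        also have "\<dots> = measure_pmf.prob (binomial_pmf n (u j0)) {k. real n * u j0 * (1+\<delta>) \<le> real k}"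
          by (rule conv[OF j0(1)])
        also have "\<dots> \<le> E" unfolding E_def G0
          using u01[OF j0(1)] assms(6) by (intro chernoff_up) auto
        also have "\<dots> \<le> real d * E" using d1 E0 by (simp add: mult_le_cancel_right1)
        finally show ?thesis .
      next
        case False
        hence G0: "G = mg d u j0" using j0 by simp
        define B where "B k = {x \<in> space M. real n * G * (1+\<delta>) \<le> real n - real (S k x)}" for k
        have sub: "{x \<in> space M. gfun d (v x) \<ge> G * (1 + \<delta>)} \<subseteq> (\<Union>k\<in>?I - {j0}. B k)"
        proof safe
          fix x assume x: "x \<in> space M" "G * (1 + \<delta>) \<le> gfun d (v x)"
          obtain k where k: "k \<in> ?I - {j0}" "mg d (v x) j0 = 1 - v x k"
            using mg_attained[OF assms(2) j0(1), of "v x"] by blast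
          have "gfun d (v x) \<le> mg d (v x) j0" using gfun_le[OF j0(1), of "v x"] by simp
          hence "G * (1+\<delta>) \<le> 1 - v x k" using x k by linarith
          hence "v x k \<le> 1 - G * (1+\<delta>)" by linarith
          hence "real (S k x) \<le> real n * (1 - G * (1+\<delta>))" using vle by blast
          hence "real n * G * (1+\<delta>) \<le> real n - real (S k x)" by (simp add: algebra_simps)
          thus "x \<in> (\<Union>k\<in>?I - {j0}. B k)" using k x(1) unfolding B_def by blast
        qed
        have Bk: "measure M (B k) \<le> E" if k: "k \<in> ?I - {j0}" for k
        proof -
          have kI: "k \<in> ?I" using k by simp
          have "measure M (B k) = measure_pmf.prob (binomial_pmf n (u k)) {m. real n * G * (1+\<delta>) \<le> real n - real m}"
            unfolding B_def by (rule conv[OF kI])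
          also have "\<dots> = measure_pmf.prob (binomial_pmf n (1 - u k)) {m. real n * G * (1+\<delta>) \<le> real m}"
            using u01[OF kI] by (intro binom_sym) (auto simp: of_nat_diff)
          also have "\<dots> \<le> E" unfolding E_def
            using u01[OF kI] assms(6) mg_ge[OF k, of u] G0 by (intro chernoff_up) auto
          finally show ?thesis .
        qed
        have "measure M {x \<in> space M. gfun d (v x) \<ge> G * (1 + \<delta>)} \<le> measure M (\<Union>k\<in>?I - {j0}. B k)"
          by (rule P.finite_measure_mono[OF sub]) (auto simp: B_def intro!: setS)
        also have "\<dots> \<le> (\<Sum>k\<in>?I - {j0}. measure M (B k))"
          by (rule P.finite_measure_subadditive_finite) (auto simp: B_def intro!: setS)
        also have "\<dots> \<le> (\<Sum>k\<in>?I - {j0}. E)" using Bk by (intro sum_mono) auto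
        also have "\<dots> \<le> real d * E" using E0 j0(1) by (simp add: mult_right_mono)
        finally show ?thesis .
      qed
    qed
    have "\<forall>j\<in>?I. \<exists>k. k \<in> ?I - {j} \<and> mg d u j = 1 - u k"
      using mg_attained[OF assms(2)] by blast
    then obtain \<kappa> where \<kappa>: "\<And>j. j \<in> ?I \<Longrightarrow> \<kappa> j \<in> ?I - {j} \<and> mg d u j = 1 - u (\<kappa> j)"
      by metis
    define A where "A j = {x \<in> space M. real (S j x) \<le> real n * G * (1-\<delta>)}" for j
    define B where "B j = {x \<in> space M. real n - real (S (\<kappa> j) x) \<le> real n * G * (1-\<delta>)}" for j
    have Aset: "A j \<in> sets M" if "j \<in> ?I" for j unfolding A_def by (rule setS[OF that])
    have Bset: "B j \<in> sets M" if "j \<in> ?I" for j unfolding B_def by (rule setS) (use \<kappa>[OF that] in auto)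
    have subL: "{x \<in> space M. gfun d (v x) \<le> G * (1 - \<delta>)} \<subseteq> (\<Union>j\<in>?I. A j \<union> B j)"
    proof safe
      fix x assume x: "x \<in> space M" "gfun d (v x) \<le> G * (1 - \<delta>)"
      obtain j where j: "j \<in> ?I" "gfun d (v x) = min (v x j) (mg d (v x) j)"
        using gfun_attained[of d "v x"] assms(2) by auto
      show "x \<in> (\<Union>j\<in>?I. A j \<union> B j)"
      proof (cases "v x j \<le> G * (1 - \<delta>)")
        case True
        hence "real (S j x) \<le> real n * (G * (1 - \<delta>))" using vle by blast
        hence "x \<in> A j" using x(1) unfolding A_def by (simp add: mult.assoc)
        thus ?thesis using j(1) by blast
      next
        case False
        hence "mg d (v x) j \<le> G * (1 - \<delta>)" using x j by linarith
        moreover have "1 - v x (\<kappa> j) \<le> mg d (v x) j" using mg_ge \<kappa>[OF j(1)] by blast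
        ultimately have "1 - G * (1 - \<delta>) \<le> v x (\<kappa> j)" by linarith
        hence "real n * (1 - G * (1 - \<delta>)) \<le> real (S (\<kappa> j) x)" using vge by blast
        hence "x \<in> B j" using x(1) unfolding B_def by (simp add: algebra_simps)
        thus ?thesis using j(1) by blast
      qed
    qed
    have Aj: "measure M (A j) \<le> E" if j: "j \<in> ?I" for j
    proof -
      have "measure M (A j) = measure_pmf.prob (binomial_pmf n (u j)) {m. real m \<le> real n * G * (1-\<delta>)}"
        unfolding A_def by (rule conv[OF j])
      also have "\<dots> \<le> E" unfolding E_def
        using u01[OF j] assms(6) gfun_le[OF j, of u] Gpos G_def by (intro chernoff_low) auto
      finally show ?thesis .
    qed
    have Bj: "measure M (B j) \<le> E" if j: "j \<in> ?I" for j
    proof -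
      have kI: "\<kappa> j \<in> ?I" and mk: "mg d u j = 1 - u (\<kappa> j)" using \<kappa>[OF j] by auto
      have "measure M (B j) = measure_pmf.prob (binomial_pmf n (u (\<kappa> j))) {m. real n - real m \<le> real n * G * (1-\<delta>)}"
        unfolding B_def by (rule conv[OF kI])
      also have "\<dots> = measure_pmf.prob (binomial_pmf n (1 - u (\<kappa> j))) {m. real m \<le> real n * G * (1-\<delta>)}"
        using u01[OF kI] by (intro binom_sym) (auto simp: of_nat_diff)
      also have "\<dots> \<le> E" unfolding E_def
        using u01[OF kI] assms(6) gfun_le[OF j, of u] Gpos G_def mk by (intro chernoff_low) auto
      finally show ?thesis .
    qed
    have L: "measure M {x \<in> space M. gfun d (v x) \<le> G * (1 - \<delta>)} \<le> 2 * real d * E"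
    proof -
      have "measure M {x \<in> space M. gfun d (v x) \<le> G * (1 - \<delta>)} \<le> measure M (\<Union>j\<in>?I. A j \<union> B j)"
        by (rule P.finite_measure_mono[OF subL]) (use Aset Bset in auto)
      also have "\<dots> \<le> (\<Sum>j\<in>?I. measure M (A j \<union> B j))"
        by (rule P.finite_measure_subadditive_finite) (use Aset Bset in auto)
      also have "\<dots> \<le> (\<Sum>j\<in>?I. 2 * E)"
      proof (intro sum_mono)
        fix j assume j: "j \<in> ?I"
        have "measure M (A j \<union> B j) \<le> measure M (A j) + measure M (B j)"
          by (rule measure_Un_le) (use Aset Bset j in auto)
        thus "measure M (A j \<union> B j) \<le> 2 * E" using Aj[OF j] Bj[OF j] by linarith
      qed
      also have "\<dots> = 2 * real d * E" by simp
      finally show ?thesis .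
    qed
    have U': "measure M {x \<in> space M. gfun d (v x) \<ge> G * (1 + \<delta>)} \<le> 2 * real d * E"
      using U E0 d1 by (smt (verit) mult_right_mono)
    have L': "measure M {x \<in> space M. gfun d (v x) \<le> G * (1 - \<delta>)} \<le> 4 * real d * E"
      using L E0 d1 by (smt (verit) mult_right_mono)
    show ?thesis using U' L' hpart unfolding Eeq v_def G_def by simp
  qed
qed

end
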